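(* Let $Q$ be an indefinite ternary quadratic form with $\det Q=1$. There is a constant $c>0$ depending only on $Q$ such that the following holds. Let $L\subset\mathbb{R}^3$ be a plane and let $\mathbf{m}_1,\mathbf{m}_2,\mathbf{m}_3\in\mathbb{Z}^3\cap L$ be such that no two of them lie on a common line through the origin. If $0\le\epsilon<1$, $R>1$, $|Q(\mathbf{m}_i)|\le\epsilon$ and $R<\|\mathbf{m}_i\|<R^2$ for all $1\le i\le 3$, then $\epsilon\ge cR^{-64}$.
   Context: $\|\cdot\|$ is the supremum norm on $\mathbb{R}^3$. *)

theory Defs
  imports "HOL-Analysis.Analysis"
begin

text \<open>A ternary quadratic form is represented by its symmetric Gram matrix A,
  Q(x) = x^T A x; its determinant is det A.\<close>
definition qform :: "real^3^3 \<Rightarrow> real^3 \<Rightarrow> real" where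
  "qform A x = x \<bullet> (A *v x)"

definition indefinite_qform :: "real^3^3 \<Rightarrow> bool" where
  "indefinite_qform A \<longleftrightarrow> (\<exists>x. qform A x > 0) \<and> (\<exists>y. qform A y < 0)"

definition int_vec :: "real^3 \<Rightarrow> bool" where
  "int_vec x \<longleftrightarrow> (\<forall>i. x $ i \<in> \<int>)"

end

theory Submission
  imports Defs
begin
unbundle cross3_syntax

lemma cross_bnd:
  fixes x y :: "real^3"
  assumes "\<forall>i. \<bar>x$i\<bar> \<le> T1" "\<forall>i. \<bar>y$i\<bar> \<le> T2"
  shows "\<bar>(x \<times> y)$i\<bar> \<le> 2*T1*T2"
proof -
  have h: "\<bar>x$a * y$b - y$c * x$d\<bar> \<le> 2*T1*T2" for a b c d
  proof -
    have "\<bar>x$a * y$b\<bar> \<le> T1*T2" unfolding abs_mult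
      by (meson abs_ge_zero assms mult_mono order_trans)
    moreover have "\<bar>y$c * x$d\<bar> \<le> T1*T2" unfolding abs_mult
      by (metis abs_ge_zero assms mult.commute mult_mono order_trans)
    ultimately show ?thesis by linarith
  qed
  show ?thesis using exhaust_3[of i] h[of 2 3 2 3] h[of 3 1 3 1] h[of 1 2 1 2]
    by (auto simp: cross_components)
qed

lemma cross_int:
  fixes x y :: "real^3"
  assumes "int_vec x" "int_vec y"
  shows "int_vec (x \<times> y)"
  using assms unfolding int_vec_def forall_3 by (simp add: cross_components)

lemma int_nonzero:
  fixes x :: "real^3"
  assumes "int_vec x" "x \<noteq> 0"
  shows "\<exists>i. \<bar>x$i\<bar> \<ge> 1"
proof -
  obtain i where "x$i \<noteq> 0" using assms(2) by (metis vec_eq_iff zero_index)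
  moreover have "x$i \<in> \<int>" using assms(1) int_vec_def by auto
  then obtain k where k: "x$i = of_int k" by (auto elim: Ints_cases)
  ultimately have "k \<noteq> 0" by auto
  then have "\<bar>k\<bar> \<ge> 1" by linarith
  then have "\<bar>x$i\<bar> \<ge> 1" using k
    by (metis of_int_1_le_iff of_int_abs)
  thus ?thesis by blast
qed

lemma B_bnd:
  fixes x y :: "real^3" and A :: "real^3^3"
  assumes "\<forall>i. \<bar>x$i\<bar> \<le> T1" "\<forall>i. \<bar>y$i\<bar> \<le> T2"
  shows "\<bar>x \<bullet> (A *v y)\<bar> \<le> (\<Sum>i\<in>UNIV. \<Sum>j\<in>UNIV. \<bar>A$i$j\<bar>) * T1 * T2"
proof -
  have "x \<bullet> (A *v y) = (\<Sum>i\<in>UNIV. \<Sum>j\<in>UNIV. x$i * A$i$j * y$j)"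
    by (simp add: inner_vec_def matrix_vector_mult_def sum_distrib_left mult.assoc)
  also have "\<bar>\<dots>\<bar> \<le> (\<Sum>i\<in>UNIV. \<Sum>j\<in>UNIV. \<bar>x$i * A$i$j * y$j\<bar>)"
    by (rule order_trans[OF sum_abs sum_mono]) (rule sum_abs)
  also have "\<dots> \<le> (\<Sum>i\<in>UNIV. \<Sum>j\<in>UNIV. \<bar>A$i$j\<bar> * (T1 * T2))"
  proof (intro sum_mono)
    fix i j
    have "\<bar>x$i\<bar> * \<bar>y$j\<bar> \<le> T1 * T2"
      by (meson abs_ge_zero assms mult_mono order_trans)
    then have "\<bar>A$i$j\<bar> * (\<bar>x$i\<bar> * \<bar>y$j\<bar>) \<le> \<bar>A$i$j\<bar> * (T1 * T2)"
      by (rule mult_left_mono) simp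
    moreover have "\<bar>x$i * A$i$j * y$j\<bar> = \<bar>A$i$j\<bar> * (\<bar>x$i\<bar> * \<bar>y$j\<bar>)"
      by (simp add: abs_mult algebra_simps)
    ultimately show "\<bar>x$i * A$i$j * y$j\<bar> \<le> \<bar>A$i$j\<bar> * (T1 * T2)" by simp
  qed
  also have "\<dots> = (\<Sum>i\<in>UNIV. \<Sum>j\<in>UNIV. \<bar>A$i$j\<bar>) * T1 * T2"
    by (simp add: sum_distrib_right mult.assoc)
  finally show ?thesis .
qed

lemma PAP_entry:
  fixes P A :: "real^3^3"
  shows "(P ** A ** transpose P) $ i $ j = (P$i) \<bullet> (A *v (P$j))"
proof -
  have "(P ** A ** transpose P) $ i $ j = (\<Sum>k\<in>UNIV. (\<Sum>l\<in>UNIV. P$i$l * A$l$k) * P$j$k)"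
    by (simp add: matrix_matrix_mult_def transpose_def)
  also have "\<dots> = (\<Sum>k\<in>UNIV. \<Sum>l\<in>UNIV. P$i$l * A$l$k * P$j$k)"
    by (simp add: sum_distrib_right)
  also have "\<dots> = (\<Sum>l\<in>UNIV. \<Sum>k\<in>UNIV. P$i$l * A$l$k * P$j$k)"
    by (rule sum.swap)
  also have "\<dots> = (P$i) \<bullet> (A *v (P$j))"
    by (simp add: inner_vec_def matrix_vector_mult_def sum_distrib_left mult.assoc)
  finally show ?thesis .
qed


lemma tri_bnd:
  fixes x y z :: real
  assumes "\<bar>x\<bar> \<le> a" "\<bar>y\<bar> \<le> b" "\<bar>z\<bar> \<le> c"
  shows "\<bar>x*y*z\<bar> \<le> a*b*c"
  unfolding abs_mult using assms
  by (meson abs_ge_zero mult_mono order_trans zero_le_mult_iff)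

lemma det_bnd:
  fixes M :: "real^3^3"
  assumes g: "\<bar>M$1$1\<bar> \<le> g" "\<bar>M$1$2\<bar> \<le> g" "\<bar>M$2$1\<bar> \<le> g" "\<bar>M$2$2\<bar> \<le> g"
    and K: "\<And>i j. \<bar>M$i$j\<bar> \<le> K"
  shows "\<bar>det M\<bar> \<le> 6*g*K*K"
proof -
  have t1: "\<bar>M$1$1 * M$2$2 * M$3$3\<bar> \<le> g*K*K" by (rule tri_bnd[OF g(1) K K])
  have t2: "\<bar>M$1$2 * M$2$3 * M$3$1\<bar> \<le> g*K*K" by (rule tri_bnd[OF g(2) K K])
  have t3: "\<bar>M$1$3 * M$2$1 * M$3$2\<bar> \<le> K*g*K" by (rule tri_bnd[OF K g(3) K])
  have t4: "\<bar>M$1$1 * M$2$3 * M$3$2\<bar> \<le> g*K*K" by (rule tri_bnd[OF g(1) K K])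
  have t5: "\<bar>M$1$2 * M$2$1 * M$3$3\<bar> \<le> g*K*K" by (rule tri_bnd[OF g(2) K K])
  have t6: "\<bar>M$1$3 * M$2$2 * M$3$1\<bar> \<le> K*g*K" by (rule tri_bnd[OF K g(4) K])
  have e: "K*g*K = g*K*K" by simp
  show ?thesis unfolding det_3 using t1 t2 t3 t4 t5 t6 unfolding e by linarith
qed


lemma coef_bnd:
  fixes v n :: "real^3"
  assumes "int_vec v" "v \<noteq> 0" "v = a *\<^sub>R n" "int_vec n" "n \<noteq> 0"
    "\<forall>i. \<bar>v$i\<bar> \<le> T" "\<forall>i. \<bar>n$i\<bar> \<le> T"
  shows "1 \<le> \<bar>a\<bar> * T" "\<bar>a\<bar> \<le> T"
proof -
  obtain i where i: "\<bar>v$i\<bar> \<ge> 1" using int_nonzero[OF assms(1,2)] by blast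
  have "\<bar>v$i\<bar> = \<bar>a\<bar> * \<bar>n$i\<bar>" using assms(3) by (simp add: abs_mult)
  also have "\<dots> \<le> \<bar>a\<bar> * T" using assms(7) by (simp add: mult_left_mono)
  finally show "1 \<le> \<bar>a\<bar> * T" using i by linarith
  obtain j where j: "\<bar>n$j\<bar> \<ge> 1" using int_nonzero[OF assms(4,5)] by blast
  have "\<bar>a\<bar> \<le> \<bar>a\<bar> * \<bar>n$j\<bar>" using j by (simp add: mult_le_cancel_left1)
  also have "\<dots> = \<bar>v$j\<bar>" using assms(3) by (simp add: abs_mult)
  also have "\<dots> \<le> T" using assms(6) by simp
  finally show "\<bar>a\<bar> \<le> T" .
qed

theorem lemma2p5:
  fixes A :: "real^3^3"
  assumes "transpose A = A" and "det A = 1" and "indefinite_qform A"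
  shows "\<exists>c>0. \<forall>(L :: (real^3) set) m1 m2 m3 (\<epsilon>::real) (R::real).
           subspace L \<and> dim L = 2 \<and>
           m1 \<in> L \<and> m2 \<in> L \<and> m3 \<in> L \<and>
           int_vec m1 \<and> int_vec m2 \<and> int_vec m3 \<and>
           \<not> collinear {0, m1, m2} \<and> \<not> collinear {0, m1, m3} \<and> \<not> collinear {0, m2, m3} \<and>
           0 \<le> \<epsilon> \<and> \<epsilon> < 1 \<and> R > 1 \<and>
           (\<forall>m\<in>{m1, m2, m3}. \<bar>qform A m\<bar> \<le> \<epsilon> \<and> R < infnorm m \<and> infnorm m < R^2)
           \<longrightarrow> \<epsilon> \<ge> c * R powr (-64)"
proof -
  define S0 where "S0 = (\<Sum>i\<in>UNIV. \<Sum>j\<in>UNIV. \<bar>A$i$j\<bar>)"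
  define S where "S = S0 + 1"
  have S0: "S0 \<ge> 0" unfolding S0_def by (intro sum_nonneg) auto
  have Spos: "S > 0" using S0 S_def by simp
  have sym: "y \<bullet> (A *v x) = x \<bullet> (A *v y)" for x y
  proof -
    have "y \<bullet> (A *v x) = y \<bullet> (transpose A *v x)" using assms(1) by simp
    also have "\<dots> = (x v* A) \<bullet> y" by (simp add: inner_commute)
    also have "\<dots> = x \<bullet> (A *v y)" by (rule dot_lmul_matrix)
    finally show ?thesis .
  qed
  have Bb: "\<bar>x \<bullet> (A *v y)\<bar> \<le> S * T1 * T2" if "\<forall>i. \<bar>x$i\<bar> \<le> T1" "\<forall>i. \<bar>y$i\<bar> \<le> T2" for x y T1 T2
  proof -
    have "T1 \<ge> 0" "T2 \<ge> 0" using that by (meson abs_ge_zero order_trans)+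
    then have "S0 * T1 * T2 \<le> S * T1 * T2" unfolding S_def
      by (simp add: mult_right_mono)
    then show ?thesis using B_bnd[OF that, of A] unfolding S0_def by linarith
  qed
  define c where "c = 1 / (4608 * S^2)"
  have cpos: "c > 0" unfolding c_def using Spos by simp
  show ?thesis
  proof (intro exI[of _ c] conjI cpos allI impI)
    fix L :: "(real^3) set" and m1 m2 m3 :: "real^3" and \<epsilon> R :: real
    assume H: "subspace L \<and> dim L = 2 \<and>
           m1 \<in> L \<and> m2 \<in> L \<and> m3 \<in> L \<and>
           int_vec m1 \<and> int_vec m2 \<and> int_vec m3 \<and>
           \<not> collinear {0, m1, m2} \<and> \<not> collinear {0, m1, m3} \<and> \<not> collinear {0, m2, m3} \<and>
           0 \<le> \<epsilon> \<and> \<epsilon> < 1 \<and> R > 1 \<and>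
           (\<forall>m\<in>{m1, m2, m3}. \<bar>qform A m\<bar> \<le> \<epsilon> \<and> R < infnorm m \<and> infnorm m < R^2)"
    then have L: "subspace L" "dim L = 2" "m1 \<in> L" "m2 \<in> L" "m3 \<in> L"
      and I: "int_vec m1" "int_vec m2" "int_vec m3"
      and C: "\<not> collinear {0, m1, m2}" "\<not> collinear {0, m1, m3}" "\<not> collinear {0, m2, m3}"
      and E: "0 \<le> \<epsilon>" "\<epsilon> < 1" "R > 1"
      and Q: "\<bar>qform A m1\<bar> \<le> \<epsilon>" "\<bar>qform A m2\<bar> \<le> \<epsilon>" "\<bar>qform A m3\<bar> \<le> \<epsilon>"
      and N: "infnorm m1 < R^2" "infnorm m2 < R^2" "infnorm m3 < R^2"
      by auto
    define T where "T = 2 * R^4"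
    have R2T: "R^2 \<le> T"
    proof -
      have "R^2 \<le> R^4" using E(3) by (intro power_increasing) auto
      moreover have "R^4 \<ge> 0" using E(3) by simp
      ultimately show ?thesis unfolding T_def by linarith
    qed
    have bm: "\<forall>i. \<bar>m$i\<bar> \<le> R^2" if "infnorm m < R^2" for m :: "real^3"
      using that component_le_infnorm_cart by (meson less_imp_le order_trans)
    have b1: "\<forall>i. \<bar>m1$i\<bar> \<le> R^2" and b2: "\<forall>i. \<bar>m2$i\<bar> \<le> R^2" and b3: "\<forall>i. \<bar>m3$i\<bar> \<le> R^2"
      using bm N by auto
    have TT: "2 * R^2 * R^2 = T" unfolding T_def by algebra
    define n where "n = m1 \<times> m2"
    have n0: "n \<noteq> 0" unfolding n_def using C(1) cross_eq_0 by blast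
    have nI: "int_vec n" unfolding n_def by (rule cross_int[OF I(1) I(2)])
    have nb: "\<forall>i. \<bar>n$i\<bar> \<le> T" unfolding n_def using cross_bnd[OF b1 b2] TT by simp
    have m2z: "m2 \<noteq> 0" using n0 unfolding n_def by auto
    have d1: "dim {m2} = 1" using m2z by (simp add: dim_insert)
    have nsp: "m1 \<notin> span {m2}"
    proof
      assume "m1 \<in> span {m2}"
      then obtain k where "m1 = k *\<^sub>R m2" by (auto simp: span_singleton)
      then have "n = 0" unfolding n_def by (simp add: cross_mult_left)
      then show False using n0 by simp
    qed
    have d2: "dim {m1, m2} = 2" using d1 nsp by (simp add: dim_insert)
    have spL: "span {m1, m2} = span L"
      by (rule dim_eq_span) (use L d2 in auto)
    have "m3 \<in> span {m1, m2}" using spL L(5) span_base by blast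
    then obtain a where "m3 - a *\<^sub>R m1 \<in> span {m2}" by (auto simp: span_breakdown_eq)
    then obtain b where "m3 - a *\<^sub>R m1 = b *\<^sub>R m2" by (auto simp: span_singleton)
    then have m3e: "m3 = a *\<^sub>R m1 + b *\<^sub>R m2" by (simp add: algebra_simps)
    have an: "m3 \<times> m2 = a *\<^sub>R n" unfolding m3e n_def by (simp add: cross_add_left cross_mult_left)
    have bn: "m1 \<times> m3 = b *\<^sub>R n" unfolding m3e n_def by (simp add: cross_add_right cross_mult_right)
    have z32: "m3 \<times> m2 \<noteq> 0"
    proof
      assume "m3 \<times> m2 = 0"
      then have "m2 \<times> m3 = 0" by (metis cross_skew neg_equal_0_iff_equal)
      then show False using C(3) cross_eq_0 by blast
    qed
    have z13: "m1 \<times> m3 \<noteq> 0" using C(2) cross_eq_0 by blast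
    have T2: "T \<ge> 2" unfolding T_def using E(3) by simp
    have cb: "\<forall>i. \<bar>(m3 \<times> m2)$i\<bar> \<le> T" "\<forall>i. \<bar>(m1 \<times> m3)$i\<bar> \<le> T"
      using cross_bnd[OF b3 b2] cross_bnd[OF b1 b3] TT by simp_all
    note ab = coef_bnd[OF cross_int[OF I(3) I(2)] z32 an nI n0 cb(1) nb]
    note bb = coef_bnd[OF cross_int[OF I(1) I(3)] z13 bn nI n0 cb(2) nb]
    define \<alpha> where "\<alpha> = qform A m1"
    define \<gamma> where "\<gamma> = qform A m2"
    define \<beta> where "\<beta> = m1 \<bullet> (A *v m2)"
    have q3: "qform A m3 = a^2 * \<alpha> + 2*a*b*\<beta> + b^2 * \<gamma>"
      unfolding m3e qform_def \<alpha>_def \<beta>_def \<gamma>_def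
      using sym[of m1 m2]
      by (simp add: matrix_vector_right_distrib matrix_vector_mult_scaleR inner_add_left inner_add_right
          algebra_simps power2_eq_square)
    have sa2: "a^2 \<le> T^2" using ab(2) by (metis abs_ge_zero power2_abs power_mono)
    have sb2: "b^2 \<le> T^2" using bb(2) by (metis abs_ge_zero power2_abs power_mono)
    have "\<bar>a^2 * \<alpha>\<bar> \<le> T^2 * \<epsilon>"
      unfolding abs_mult using sa2 Q(1) \<alpha>_def by (simp add: mult_mono)
    moreover have "\<bar>b^2 * \<gamma>\<bar> \<le> T^2 * \<epsilon>"
      unfolding abs_mult using sb2 Q(2) \<gamma>_def by (simp add: mult_mono)
    ultimately have X: "\<bar>2*a*b*\<beta>\<bar> \<le> \<epsilon> + 2 * T^2 * \<epsilon>"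
      using q3 Q(3) by linarith
    have "1 * 1 \<le> T * T" using T2 by (intro mult_mono) auto
    then have "1 + 2 * T^2 \<le> 3 * T^2" by (simp add: power2_eq_square)
    then have X1: "\<epsilon> + 2 * T^2 * \<epsilon> \<le> 3 * T^2 * \<epsilon>" using E(1)
      by (metis distrib_right mult_1 mult_right_mono)
    have X': "\<bar>2*a*b*\<beta>\<bar> = 2 * (\<bar>a\<bar> * \<bar>b\<bar>) * \<bar>\<beta>\<bar>" by (simp add: abs_mult)
    have X2: "2 * (\<bar>a\<bar> * \<bar>b\<bar>) * \<bar>\<beta>\<bar> \<le> 3 * T^2 * \<epsilon>" using X X' X1 by linarith
    have ab1: "1 \<le> (\<bar>a\<bar> * \<bar>b\<bar>) * T^2"
    proof -
      have "1 * 1 \<le> (\<bar>a\<bar> * T) * (\<bar>b\<bar> * T)" using ab(1) bb(1) by (intro mult_mono) auto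
      then show ?thesis by (simp add: power2_eq_square algebra_simps)
    qed
    have "\<bar>\<beta>\<bar> \<le> \<bar>\<beta>\<bar> * ((\<bar>a\<bar> * \<bar>b\<bar>) * T^2)" using ab1 by (simp add: mult_le_cancel_left1)
    also have "\<dots> = (2 * (\<bar>a\<bar> * \<bar>b\<bar>) * \<bar>\<beta>\<bar>) * T^2 / 2" by simp
    also have "\<dots> \<le> (3 * T^2 * \<epsilon>) * T^2 / 2" using X2 by (intro divide_right_mono mult_right_mono) auto
    also have "\<dots> \<le> 3 * \<epsilon> * T^4" using E(1) T2 by (simp add: power2_eq_square power4_eq_xxxx)
    finally have beta: "\<bar>\<beta>\<bar> \<le> 3 * \<epsilon> * T^4" .
    define g where "g = 3 * \<epsilon> * T^4"
    have eg: "\<epsilon> \<le> g"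
    proof -
      have "1 \<le> T^4" using T2 by (simp add: one_le_power)
      then have "\<epsilon> * 1 \<le> \<epsilon> * T^4" using E(1) by (intro mult_left_mono) auto
      then show ?thesis unfolding g_def using E(1) by linarith
    qed
    define P :: "real^3^3" where "P = vector [m1, m2, n]"
    have P1: "P$1 = m1" and P2: "P$2 = m2" and P3: "P$3 = n" unfolding P_def by simp_all
    have detP: "det P = n \<bullet> n"
    proof -
      have "det P = m1 \<bullet> (m2 \<times> n)" unfolding P_def by (simp add: dot_cross_det)
      also have "\<dots> = n \<bullet> n" unfolding n_def by (simp add: cross3_simps)
      finally show ?thesis .
    qed
    obtain j where j: "\<bar>n$j\<bar> \<ge> 1" using int_nonzero[OF nI n0] by blast
    have "norm n \<ge> 1" using j component_le_norm_cart[of n j] by linarith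
    then have "norm n * norm n \<ge> 1 * 1" by (intro mult_mono) auto
    then have nn: "n \<bullet> n \<ge> 1" by (simp add: power2_norm_eq_inner[symmetric] power2_eq_square)
    define M where "M = P ** A ** transpose P"
    have detM: "det M = det P * det P" unfolding M_def using assms(2) by (simp add: det_mul)
    have dM: "1 \<le> \<bar>det M\<bar>"
    proof -
      have "1 * 1 \<le> det P * det P" using nn detP by (intro mult_mono) auto
      then show ?thesis using detM by simp
    qed
    have Pb: "\<forall>i. \<bar>P$k$i\<bar> \<le> T" for k
    proof -
      have "k = 1 \<or> k = 2 \<or> k = 3" by (rule exhaust_3)
      moreover have "\<forall>i. \<bar>m1$i\<bar> \<le> T" using b1 R2T by (meson order_trans)
      moreover have "\<forall>i. \<bar>m2$i\<bar> \<le> T" using b2 R2T by (meson order_trans)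
      ultimately show ?thesis using P1 P2 P3 nb by auto
    qed
    have Me: "M$i$j = P$i \<bullet> (A *v P$j)" for i j unfolding M_def by (rule PAP_entry)
    define K where "K = S * T * T"
    have MK: "\<bar>M$i$j\<bar> \<le> K" for i j unfolding Me K_def by (rule Bb[OF Pb Pb])
    have g: "\<bar>M$1$1\<bar> \<le> g" "\<bar>M$1$2\<bar> \<le> g" "\<bar>M$2$1\<bar> \<le> g" "\<bar>M$2$2\<bar> \<le> g"
      unfolding Me P1 P2 using Q(1,2) eg beta sym[of m1 m2]
      by (auto simp: qform_def \<beta>_def g_def)
    have "1 \<le> 6 * g * K * K" using det_bnd[OF g MK] dM by linarith
    also have "6 * g * K * K = 18 * S^2 * T^8 * \<epsilon>" unfolding g_def K_def
      by algebra
    also have "T^8 = 256 * R^32" unfolding T_def by algebra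
    finally have fin: "1 \<le> (4608 * S^2 * R^32) * \<epsilon>" by simp
    have Rp: "R powr (-64) = 1 / R^64" using E(3) by (simp add: powr_neg_numeral)
    have "R^32 \<le> R^64" using E(3) by (intro power_increasing) auto
    then have "1 / R^64 \<le> 1 / R^32" using E(3) by (intro divide_left_mono) auto
    then have "c * R powr (-64) \<le> c * (1 / R^32)" unfolding Rp using cpos by (intro mult_left_mono) auto
    also have "c * (1 / R^32) = 1 / (4608 * S^2 * R^32)" unfolding c_def by simp
    also have "\<dots> \<le> \<epsilon>" using fin Spos E(3) by (simp add: divide_le_eq mult.commute)
    finally show "c * R powr (-64) \<le> \<epsilon>" .
  qed
qed

end
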